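(* Let $d\ge2$, $\alpha\in(0,\infty)^d$, $N\in\mathbb Z_+$, $j\in\{1,\dots,d\}$, and let $e_j$ be the $j$-th standard basis vector of $\mathbb R^d$. Then for every $s\in N\Delta_{(d-1)}$ and $0\le n\le N$, $$H^{\alpha}_n(s,Ne_j)=H^{(\alpha_j,|\alpha|-\alpha_j)}_n(s_j,N).$$
   Context: $N\Delta_{(d-1)}=\{r\in\mathbb Z_+^d:\sum_ir_i=N\}$, $|\alpha|=\sum_i\alpha_i$. $DM_\beta(l;N)=\binom{N}{l}\prod_i(\beta_i)_{(l_i)}/(|\beta|)_{(N)}$ with $(c)_{(k)}=\Gamma(c+k)/\Gamma(c)$. The Hahn kernel $H^\beta_n(r,s)=\sum_kP_k(r)P_k(s)$, where $(P_k)$ is an orthonormal basis, in $L^2(DM_\beta(\cdot;N))$, of the polynomials in $r$ of degree $\le n$ orthogonal to all polynomials of degree $<n$. For $d=2$ and $a,b>0$, $H^{(a,b)}_n(k,k')$, $k,k'\in\{0,\dots,N\}$, is this kernel for $DM_{(a,b)}(\cdot;N)$ written as a function of the first coordinate. *)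

theory Defs
  imports Complex_Main
begin

text \<open>Points of N Delta_(d-1): nonnegative integer vectors indexed by 0..d-1
  (coordinates at indices >= d are 0), summing to N.\<close>
definition simplex :: "nat \<Rightarrow> nat \<Rightarrow> (nat \<Rightarrow> nat) set" where
  "simplex d N = {r. (\<forall>i\<ge>d. r i = 0) \<and> (\<Sum>i<d. r i) = N}"

definition vabs :: "nat \<Rightarrow> (nat \<Rightarrow> real) \<Rightarrow> real" where
  "vabs d \<beta> = (\<Sum>i<d. \<beta> i)"

definition DM :: "nat \<Rightarrow> (nat \<Rightarrow> real) \<Rightarrow> nat \<Rightarrow> (nat \<Rightarrow> nat) \<Rightarrow> real" where
  "DM d \<beta> N l = (fact N / (\<Prod>i<d. fact (l i))) * (\<Prod>i<d. pochhammer (\<beta> i) (l i))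
                  / pochhammer (vabs d \<beta>) N"

definition inner_DM :: "nat \<Rightarrow> (nat \<Rightarrow> real) \<Rightarrow> nat \<Rightarrow> ((nat \<Rightarrow> nat) \<Rightarrow> real)
    \<Rightarrow> ((nat \<Rightarrow> nat) \<Rightarrow> real) \<Rightarrow> real" where
  "inner_DM d \<beta> N f g = (\<Sum>r\<in>simplex d N. DM d \<beta> N r * f r * g r)"

definition exps :: "nat \<Rightarrow> nat \<Rightarrow> (nat \<Rightarrow> nat) set" where
  "exps d n = {m. (\<forall>i\<ge>d. m i = 0) \<and> (\<Sum>i<d. m i) \<le> n}"

definition polyfun :: "nat \<Rightarrow> nat \<Rightarrow> nat \<Rightarrow> ((nat \<Rightarrow> nat) \<Rightarrow> real) \<Rightarrow> bool" where
  "polyfun d N n f \<longleftrightarrow> (\<exists>c. \<forall>r\<in>simplex d N.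
      f r = (\<Sum>m\<in>exps d n. c m * (\<Prod>i<d. real (r i) ^ m i)))"

definition Vspace :: "nat \<Rightarrow> (nat \<Rightarrow> real) \<Rightarrow> nat \<Rightarrow> nat \<Rightarrow> ((nat \<Rightarrow> nat) \<Rightarrow> real) \<Rightarrow> bool" where
  "Vspace d \<beta> N n f \<longleftrightarrow> polyfun d N n f \<and>
      (0 < n \<longrightarrow> (\<forall>g. polyfun d N (n - 1) g \<longrightarrow> inner_DM d \<beta> N f g = 0))"

definition is_ONB :: "nat \<Rightarrow> (nat \<Rightarrow> real) \<Rightarrow> nat \<Rightarrow> nat \<Rightarrow> ((nat \<Rightarrow> nat) \<Rightarrow> real) set \<Rightarrow> bool" where
  "is_ONB d \<beta> N n B \<longleftrightarrow> finite B \<and>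
     (\<forall>P\<in>B. Vspace d \<beta> N n P \<and> (\<forall>r. r \<notin> simplex d N \<longrightarrow> P r = 0)) \<and>
     (\<forall>P\<in>B. \<forall>Q\<in>B. inner_DM d \<beta> N P Q = (if P = Q then 1 else 0)) \<and>
     (\<forall>f. Vspace d \<beta> N n f \<longrightarrow> (\<exists>c. \<forall>r\<in>simplex d N. f r = (\<Sum>P\<in>B. c P * P r)))"

definition hahn_kernel :: "nat \<Rightarrow> (nat \<Rightarrow> real) \<Rightarrow> nat \<Rightarrow> nat \<Rightarrow> (nat \<Rightarrow> nat) \<Rightarrow> (nat \<Rightarrow> nat) \<Rightarrow> real" where
  "hahn_kernel d \<beta> N n r s = (let B = (SOME B. is_ONB d \<beta> N n B) in (\<Sum>P\<in>B. P r * P s))"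

definition pt2 :: "nat \<Rightarrow> nat \<Rightarrow> (nat \<Rightarrow> nat)" where
  "pt2 N k = (\<lambda>i. if i = 0 then k else if i = 1 then N - k else 0)"

definition hahn2 :: "real \<Rightarrow> real \<Rightarrow> nat \<Rightarrow> nat \<Rightarrow> nat \<Rightarrow> nat \<Rightarrow> real" where
  "hahn2 a b N n k k' = hahn_kernel 2 (\<lambda>i. if i = 0 then a else b) N n (pt2 N k) (pt2 N k')"

end

theory Submission imports Defs "HOL-Computational_Algebra.Formal_Power_Series" "HOL-Computational_Algebra.Polynomial" begin

definition W :: "real \<Rightarrow> nat \<Rightarrow> real" where "W A x = pochhammer A x / fact x"

lemma W_gchoose: "W A x = (-1)^x * ((-A) gchoose x)"
  by (simp add: W_def gbinomial_pochhammer)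

lemma W_vandermonde: "(\<Sum>x\<le>M. W A x * W B (M - x)) = W (A+B) M"
proof -
  have "(\<Sum>x\<le>M. W A x * W B (M - x)) = (\<Sum>x\<in>{0..M}. (-1)^M * (((-A) gchoose x) * ((-B) gchoose (M-x))))"
    by (rule sum.cong) (auto simp: W_gchoose power_add[symmetric])
  also have "\<dots> = (-1)^M * (((-A) + (-B)) gchoose M)"
    by (simp add: sum_distrib_left[symmetric] gbinomial_Vandermonde)
  finally show ?thesis by (simp add: W_gchoose)
qed

definition ff :: "real \<Rightarrow> nat \<Rightarrow> real" where "ff x t = (\<Prod>i<t. x - real i)"

lemma ff_0[simp]: "ff x 0 = 1" by (simp add: ff_def)
lemma ff_Suc: "ff x (Suc t) = ff x t * (x - real t)" by (simp add: ff_def)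

lemma ff_nat_zero: "r < t \<Longrightarrow> ff (real r) t = 0"
  unfolding ff_def by (rule prod_zero) auto

lemma cdiv: "(c::real) \<noteq> 0 \<Longrightarrow> X / (c * Y) * c = X / Y" by simp

lemma ff_fact: "ff (real (r + t)) t = fact (r + t) / fact r"
proof (induction t arbitrary: r)
  case 0 then show ?case by simp
next
  case (Suc t)
  have "ff (real (r + Suc t)) (Suc t) = ff (real (Suc r + t)) t * (real (r + Suc t) - real t)"
    by (simp add: ff_Suc)
  also have "\<dots> = fact (Suc r + t) / (real (Suc r) * fact r) * real (Suc r)"
    by (subst Suc.IH) (simp only: fact_Suc, simp)
  also have "\<dots> = fact (Suc r + t) / fact r"
    by (rule cdiv) simp
  also have "\<dots> = fact (r + Suc t) / fact r"
    by simp
  finally show ?case .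
qed

lemma W_ff: "W A (r + t) * ff (real (r + t)) t = pochhammer A t * W (A + real t) r"
proof -
  have "W A (r + t) * ff (real (r + t)) t = pochhammer A (t + r) / fact r"
    unfolding W_def ff_fact by (simp add: add.commute)
  also have "\<dots> = pochhammer A t * W (A + real t) r"
    by (simp add: pochhammer_product' W_def)
  finally show ?thesis .
qed

lemma L2ff:
  "(\<Sum>x\<le>M. W A x * W B (M - x) * ff (real x) s * ff (real (M - x)) t)
   = (if s + t \<le> M then pochhammer A s * pochhammer B t * W (A + B + real s + real t) (M - s - t) else 0)"
proof (cases "s + t \<le> M")
  case False
  have "W A x * W B (M - x) * ff (real x) s * ff (real (M - x)) t = 0" if "x \<le> M" for x
  proof (cases "x < s")
    case True then show ?thesis by (simp add: ff_nat_zero)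
  next
    case False
    then have "M - x < t" using \<open>\<not> s + t \<le> M\<close> that by linarith
    then show ?thesis by (simp add: ff_nat_zero)
  qed
  then have "(\<Sum>x\<le>M. W A x * W B (M - x) * ff (real x) s * ff (real (M - x)) t) = 0"
    by (intro sum.neutral ballI) simp
  then show ?thesis using False by simp
next
  case True
  define M' where "M' = M - s - t"
  let ?g = "\<lambda>x. W A x * W B (M - x) * ff (real x) s * ff (real (M - x)) t"
  have "sum ?g {..M} = sum ?g ((\<lambda>y. y + s) ` {..M'})"
  proof (rule sum.mono_neutral_right)
    show "(\<lambda>y. y + s) ` {..M'} \<subseteq> {..M}" using True by (auto simp: M'_def)
    show "\<forall>i\<in>{..M} - (\<lambda>y. y + s) ` {..M'}. ?g i = 0"
    proof
      fix x assume x: "x \<in> {..M} - (\<lambda>y. y + s) ` {..M'}"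
      show "?g x = 0"
      proof (cases "x < s")
        case True then show ?thesis by (simp add: ff_nat_zero)
      next
        case False
        then have "x = (x - s) + s" by simp
        with x have "x - s > M'" by (metis DiffD2 atMost_iff image_eqI not_le)
        then have "M - x < t" using x unfolding M'_def by auto
        then show ?thesis by (simp add: ff_nat_zero)
      qed
    qed
  qed simp
  also have "\<dots> = (\<Sum>y\<le>M'. ?g (y + s))"
    by (subst sum.reindex) (auto simp: inj_on_def)
  also have "\<dots> = (\<Sum>y\<le>M'. (pochhammer A s * W (A + real s) y) * (pochhammer B t * W (B + real t) (M' - y)))"
  proof (rule sum.cong[OF refl])
    fix y assume y: "y \<in> {..M'}"
    have e: "M - (y + s) = (M' - y) + t" using y True by (auto simp: M'_def)
    have "?g (y + s) = (W A (y + s) * ff (real (y + s)) s) * (W B ((M' - y) + t) * ff (real ((M' - y) + t)) t)"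
      by (simp add: e)
    also have "\<dots> = (pochhammer A s * W (A + real s) y) * (pochhammer B t * W (B + real t) (M' - y))"
      by (simp only: W_ff)
    finally show "?g (y + s) = \<dots>" .
  qed
  also have "\<dots> = pochhammer A s * pochhammer B t * (\<Sum>y\<le>M'. W (A + real s) y * W (B + real t) (M' - y))"
    by (simp add: sum_distrib_left mult_ac)
  also have "\<dots> = pochhammer A s * pochhammer B t * W (A + B + real s + real t) M'"
    by (simp add: W_vandermonde add_ac)
  finally show ?thesis using True by (simp add: M'_def)
qed

lemma L2ff':
  assumes "A + B > 0"
  shows "(\<Sum>x\<le>M. W A x * W B (M - x) * ff (real x) s * ff (real (M - x)) t)
   = W (A + B) M * ff (real M) (s + t) * (pochhammer A s * pochhammer B t / pochhammer (A + B) (s + t))"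
proof (cases "s + t \<le> M")
  case True
  have pne: "pochhammer (A + B) (s + t) \<noteq> 0" using pochhammer_pos[OF assms] by (metis less_irrefl)
  have "W (A + B) M * ff (real M) (s + t) = W (A+B) ((M - (s+t)) + (s+t)) * ff (real ((M - (s+t)) + (s+t))) (s + t)"
    using True by simp
  also have "\<dots> = pochhammer (A + B) (s+t) * W (A + B + real (s+t)) (M - (s+t))"
    by (rule W_ff)
  finally have e: "W (A + B) M * ff (real M) (s + t) = pochhammer (A + B) (s+t) * W (A + B + real (s+t)) (M - (s+t))" .
  have "(\<Sum>x\<le>M. W A x * W B (M - x) * ff (real x) s * ff (real (M - x)) t)
     = pochhammer A s * pochhammer B t * W (A + B + real (s+t)) (M - (s+t))"
    by (subst L2ff) (simp add: True add.assoc diff_diff_add)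
  also have "\<dots> = W (A + B) M * ff (real M) (s + t) * (pochhammer A s * pochhammer B t / pochhammer (A + B) (s + t))"
    unfolding e using pne by simp
  finally show ?thesis .
next
  case False
  then show ?thesis by (subst L2ff) (simp add: ff_nat_zero)
qed

definition ffp :: "nat \<Rightarrow> real poly" where "ffp t = (\<Prod>i<t. [:- real i, 1:])"

lemma poly_ffp: "poly (ffp t) x = ff x t"
  by (simp add: ffp_def ff_def poly_prod)

lemma degree_ffp: "degree (ffp t) \<le> t"
proof -
  have "degree (ffp t) \<le> sum (degree \<circ> (\<lambda>i. [:- real i, 1:])) {..<t}"
    unfolding ffp_def by (rule degree_prod_sum_le) simp
  also have "\<dots> = t" by simp
  finally show ?thesis .
qed

definition FS :: "nat \<Rightarrow> (real \<Rightarrow> real) \<Rightarrow> bool" where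
  "FS a f \<longleftrightarrow> (\<exists>c. \<forall>x. f x = (\<Sum>t\<le>a. c t * ff x t))"

lemma FS_add: "FS a f \<Longrightarrow> FS a g \<Longrightarrow> FS a (\<lambda>x. f x + g x)"
proof -
  assume "FS a f" "FS a g"
  then obtain c1 c2 where c1: "\<forall>x. f x = (\<Sum>t\<le>a. c1 t * ff x t)"
    and c2: "\<forall>x. g x = (\<Sum>t\<le>a. c2 t * ff x t)" unfolding FS_def by blast
  have "\<forall>x. f x + g x = (\<Sum>t\<le>a. (c1 t + c2 t) * ff x t)"
    by (simp add: c1 c2 distrib_right sum.distrib)
  then show ?thesis unfolding FS_def by - (rule exI, assumption)
qed

lemma FS_mono: "FS a f \<Longrightarrow> a \<le> b \<Longrightarrow> FS b f"
proof -
  assume "FS a f" "a \<le> b"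
  then obtain c where c: "\<forall>x. f x = (\<Sum>t\<le>a. c t * ff x t)" unfolding FS_def by blast
  have "\<forall>x. f x = (\<Sum>t\<le>b. (if t \<le> a then c t else 0) * ff x t)"
  proof
    fix x
    have "(\<Sum>t\<le>b. (if t \<le> a then c t else 0) * ff x t) = (\<Sum>t\<le>a. (if t \<le> a then c t else 0) * ff x t)"
      by (rule sum.mono_neutral_right) (use \<open>a \<le> b\<close> in auto)
    then show "f x = (\<Sum>t\<le>b. (if t \<le> a then c t else 0) * ff x t)" using c by simp
  qed
  then show ?thesis unfolding FS_def by - (rule exI, assumption)
qed

lemma FS_times_x: "FS a f \<Longrightarrow> FS (Suc a) (\<lambda>x. x * f x)"
proof -
  assume "FS a f"
  then obtain c where c: "\<forall>x. f x = (\<Sum>t\<le>a. c t * ff x t)" unfolding FS_def by blast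
  have 1: "FS (Suc a) (\<lambda>x. \<Sum>t\<le>a. c t * ff x (Suc t))"
  proof -
    have "\<forall>x. (\<Sum>t\<le>a. c t * ff x (Suc t)) = (\<Sum>t\<le>Suc a. (if t = 0 then 0 else c (t - 1)) * ff x t)"
      by (intro allI, subst sum.atMost_Suc_shift) simp
    then show ?thesis unfolding FS_def by - (rule exI, assumption)
  qed
  have 2: "FS (Suc a) (\<lambda>x. \<Sum>t\<le>a. (c t * real t) * ff x t)"
    by (rule FS_mono[of a]) (unfold FS_def, rule exI[where x="\<lambda>t. c t * real t"], simp_all)
  have xff: "x * ff x t = ff x (Suc t) + real t * ff x t" for x t
    by (simp add: ff_Suc algebra_simps)
  have e: "x * f x = (\<Sum>t\<le>a. c t * ff x (Suc t)) + (\<Sum>t\<le>a. (c t * real t) * ff x t)" for x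
  proof -
    have "x * f x = (\<Sum>t\<le>a. c t * (x * ff x t))" by (simp add: c sum_distrib_left mult_ac)
    also have "\<dots> = (\<Sum>t\<le>a. c t * ff x (Suc t) + (c t * real t) * ff x t)"
      by (simp only: xff distrib_left mult.assoc)
    also have "\<dots> = (\<Sum>t\<le>a. c t * ff x (Suc t)) + (\<Sum>t\<le>a. (c t * real t) * ff x t)"
      by (rule sum.distrib)
    finally show ?thesis .
  qed
  show ?thesis using FS_add[OF 1 2] by (simp add: e)
qed

lemma FS_power: "FS a (\<lambda>x. x ^ a)"
proof (induction a)
  case 0
  have "\<forall>x. x ^ 0 = (\<Sum>t\<le>0. (\<lambda>_. 1) t * ff x t)" by simp
  then show ?case unfolding FS_def by - (rule exI, assumption)
next
  case (Suc a) then show ?case using FS_times_x by fastforce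
qed


lemma FS_obtain: "FS a f \<Longrightarrow> \<exists>c. \<forall>x. f x = (\<Sum>t\<le>a. c t * ff x t)"
  unfolding FS_def by blast

lemma L2:
  assumes "A + B > 0"
  shows "\<exists>P. degree P \<le> a + b \<and> (\<forall>M. (\<Sum>x\<le>M. W A x * W B (M - x) * real x ^ a * real (M - x) ^ b)
           = W (A + B) M * poly P (real M))"
proof -
  obtain c where c: "\<forall>x. x ^ a = (\<Sum>s\<le>a. c s * ff x s)" using FS_obtain[OF FS_power] by blast
  obtain e where e: "\<forall>x. x ^ b = (\<Sum>t\<le>b. e t * ff x t)" using FS_obtain[OF FS_power] by blast
  define \<kappa> where "\<kappa> s t = pochhammer A s * pochhammer B t / pochhammer (A + B) (s + t)" for s t
  define P where "P = (\<Sum>s\<le>a. \<Sum>t\<le>b. smult (c s * e t * \<kappa> s t) (ffp (s + t)))"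
  have degP: "degree P \<le> a + b"
    unfolding P_def
  proof (intro degree_sum_le)
    fix s t assume "s \<in> {..a}" "t \<in> {..b}"
    then have "degree (ffp (s + t)) \<le> a + b" using degree_ffp[of "s+t"] by simp
    then show "degree (smult (c s * e t * \<kappa> s t) (ffp (s + t))) \<le> a + b"
      using degree_smult_le order_trans by blast
  qed auto
  have pw: "K * u ^ a * v ^ b = (\<Sum>s\<le>a. \<Sum>t\<le>b. c s * e t * (K * ff u s * ff v t))" for K u v :: real
  proof -
    have "K * u ^ a * v ^ b = K * (\<Sum>s\<le>a. c s * ff u s) * (\<Sum>t\<le>b. e t * ff v t)"
      using c e by metis
    also have "\<dots> = (\<Sum>s\<le>a. \<Sum>t\<le>b. c s * e t * (K * ff u s * ff v t))"
      by (simp add: sum_distrib_left sum_distrib_right mult_ac)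
    finally show ?thesis .
  qed
  have "(\<Sum>x\<le>M. W A x * W B (M - x) * real x ^ a * real (M - x) ^ b)
           = W (A + B) M * poly P (real M)" for M
  proof -
    have "(\<Sum>x\<le>M. W A x * W B (M - x) * real x ^ a * real (M - x) ^ b)
        = (\<Sum>x\<le>M. \<Sum>s\<le>a. \<Sum>t\<le>b. c s * e t * (W A x * W B (M - x) * ff (real x) s * ff (real (M - x)) t))"
      by (rule sum.cong[OF refl]) (rule pw)
    also have "\<dots> = (\<Sum>s\<le>a. \<Sum>t\<le>b. c s * e t * (\<Sum>x\<le>M. W A x * W B (M - x) * ff (real x) s * ff (real (M - x)) t))"
      by (simp add: sum_distrib_left sum.swap[of _ "{..M}"])
    also have "\<dots> = (\<Sum>s\<le>a. \<Sum>t\<le>b. c s * e t * (W (A + B) M * ff (real M) (s + t) * \<kappa> s t))"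
      by (simp only: L2ff'[OF assms] \<kappa>_def)
    also have "\<dots> = W (A + B) M * poly P (real M)"
      by (simp add: P_def poly_sum poly_ffp sum_distrib_left mult_ac)
    finally show ?thesis .
  qed
  then show ?thesis using degP by blast
qed


lemma L2q:
  assumes "A + B > 0"
  shows "\<exists>P. degree P \<le> a + degree q \<and> (\<forall>M. (\<Sum>x\<le>M. W A x * W B (M - x) * real x ^ a * poly q (real (M - x)))
           = W (A + B) M * poly P (real M))"
proof -
  have "\<forall>b. \<exists>P. degree P \<le> a + b \<and> (\<forall>M. (\<Sum>x\<le>M. W A x * W B (M - x) * real x ^ a * real (M - x) ^ b)
           = W (A + B) M * poly P (real M))"
    using L2[OF assms] by blast
  then obtain PP where PP: "\<And>b. degree (PP b) \<le> a + b"
    "\<And>b M. (\<Sum>x\<le>M. W A x * W B (M - x) * real x ^ a * real (M - x) ^ b) = W (A + B) M * poly (PP b) (real M)"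
    by metis
  define P where "P = (\<Sum>b\<le>degree q. smult (coeff q b) (PP b))"
  have degP: "degree P \<le> a + degree q"
    unfolding P_def
  proof (intro degree_sum_le)
    fix b assume "b \<in> {..degree q}"
    then have "degree (PP b) \<le> a + degree q" using PP(1)[of b] by simp
    then show "degree (smult (coeff q b) (PP b)) \<le> a + degree q"
      using degree_smult_le order_trans by blast
  qed auto
  have pw: "K * poly q y = (\<Sum>b\<le>degree q. coeff q b * (K * y ^ b))" for K y :: real
    by (simp add: poly_altdef sum_distrib_left mult_ac)
  have "(\<Sum>x\<le>M. W A x * W B (M - x) * real x ^ a * poly q (real (M - x)))
           = W (A + B) M * poly P (real M)" for M
  proof -
    have "(\<Sum>x\<le>M. W A x * W B (M - x) * real x ^ a * poly q (real (M - x)))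
       = (\<Sum>x\<le>M. \<Sum>b\<le>degree q. coeff q b * (W A x * W B (M - x) * real x ^ a * real (M - x) ^ b))"
      by (rule sum.cong[OF refl]) (rule pw)
    also have "\<dots> = (\<Sum>b\<le>degree q. coeff q b * (\<Sum>x\<le>M. W A x * W B (M - x) * real x ^ a * real (M - x) ^ b))"
      by (simp add: sum_distrib_left sum.swap[of _ "{..M}"])
    also have "\<dots> = (\<Sum>b\<le>degree q. coeff q b * (W (A + B) M * poly (PP b) (real M)))"
      by (simp only: PP(2))
    also have "\<dots> = W (A + B) M * poly P (real M)"
      by (simp add: P_def poly_sum sum_distrib_left mult_ac)
    finally show ?thesis .
  qed
  then show ?thesis using degP by blast
qed

definition cmp :: "nat set \<Rightarrow> nat \<Rightarrow> (nat \<Rightarrow> nat) set" where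
  "cmp I M = {r. (\<forall>i. i \<notin> I \<longrightarrow> r i = 0) \<and> sum r I = M}"

lemma comp_empty: "cmp {} M = (if M = 0 then {\<lambda>_. 0} else {})"
  by (auto simp: cmp_def)

lemma comp_insert:
  assumes "a \<notin> I" "finite I"
  shows "cmp (insert a I) M = (\<lambda>(x, r). r(a := x)) ` (SIGMA x:{..M}. cmp I (M - x))"
proof
  show "cmp (insert a I) M \<subseteq> (\<lambda>(x, r). r(a := x)) ` (SIGMA x:{..M}. cmp I (M - x))"
  proof
    fix r assume r: "r \<in> cmp (insert a I) M"
    then have s: "r a + sum r I = M" using assms by (simp add: cmp_def)
    have "sum (r(a := 0)) I = sum r I" by (rule sum.cong) (use assms in auto)
    then have "r(a := 0) \<in> cmp I (M - r a)"
      using r s assms unfolding cmp_def by auto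
    moreover have "r = (\<lambda>(x, r). r(a := x)) (r a, r(a := 0))" by simp
    moreover have "r a \<le> M" using s by simp
    ultimately show "r \<in> (\<lambda>(x, r). r(a := x)) ` (SIGMA x:{..M}. cmp I (M - x))" by blast
  qed
next
  show "(\<lambda>(x, r). r(a := x)) ` (SIGMA x:{..M}. cmp I (M - x)) \<subseteq> cmp (insert a I) M"
  proof
    fix y assume "y \<in> (\<lambda>(x, r). r(a := x)) ` (SIGMA x:{..M}. cmp I (M - x))"
    then obtain x r where x: "x \<le> M" and r: "r \<in> cmp I (M - x)" and y: "y = r(a := x)" by auto
    have "sum y I = sum r I" unfolding y using assms by (intro sum.cong) auto
    then show "y \<in> cmp (insert a I) M"
      using x r assms unfolding cmp_def y by auto
  qed
qed

lemma finite_comp: "finite I \<Longrightarrow> finite (cmp I M)"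
proof (induction I arbitrary: M rule: finite_induct)
  case empty then show ?case by (simp add: comp_empty)
next
  case (insert a I) then show ?case by (simp add: comp_insert)
qed

lemma comp_zero_outside: "r \<in> cmp I M \<Longrightarrow> i \<notin> I \<Longrightarrow> r i = 0"
  by (simp add: cmp_def)

lemma sum_comp_insert:
  assumes "a \<notin> I" "finite I"
  shows "(\<Sum>r\<in>cmp (insert a I) M. G r) = (\<Sum>x\<le>M. \<Sum>r\<in>cmp I (M - x). G (r(a := x)))"
proof -
  have inj: "inj_on (\<lambda>(x, r). r(a := x)) (SIGMA x:{..M}. cmp I (M - x))"
  proof (rule inj_onI, clarify)
    fix x r x' r' assume r: "r \<in> cmp I (M - x)" and r': "r' \<in> cmp I (M - x')"
      and eq: "r(a := x) = r'(a := x')"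
    have "x = x'" using fun_cong[OF eq, of a] by simp
    moreover have "r = r'"
    proof
      fix i show "r i = r' i"
      proof (cases "i = a")
        case True then show ?thesis using comp_zero_outside[OF r] comp_zero_outside[OF r'] assms by simp
      next
        case False then show ?thesis using fun_cong[OF eq, of i] by simp
      qed
    qed
    ultimately show "x = x' \<and> r = r'" by simp
  qed
  have "(\<Sum>r\<in>cmp (insert a I) M. G r) = (\<Sum>(x, r)\<in>(SIGMA x:{..M}. cmp I (M - x)). G (r(a := x)))"
    unfolding comp_insert[OF assms] by (subst sum.reindex[OF inj]) (simp add: o_def case_prod_unfold)
  also have "\<dots> = (\<Sum>x\<le>M. \<Sum>r\<in>cmp I (M - x). G (r(a := x)))"
    by (subst sum.Sigma) (auto simp: finite_comp assms)
  finally show ?thesis .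
qed


lemma W_0_left: "W 0 M = (if M = 0 then 1 else 0)"
  by (simp add: W_def pochhammer_0_left)

lemma LI:
  assumes "finite I" "\<forall>i\<in>I. \<beta> i > 0"
  shows "\<exists>p. degree p \<le> sum m I \<and> (\<forall>M. (\<Sum>r\<in>cmp I M. \<Prod>i\<in>I. W (\<beta> i) (r i) * real (r i) ^ m i)
            = W (sum \<beta> I) M * poly p (real M))"
  using assms
proof (induction I rule: finite_induct)
  case empty
  have "\<forall>M. (\<Sum>r\<in>cmp {} M. \<Prod>i\<in>{}. W (\<beta> i) (r i) * real (r i) ^ m i) = W (sum \<beta> {}) M * poly 1 (real M)"
    by (simp add: comp_empty W_0_left)
  then show ?case by (intro exI[of _ 1]) simp
next
  case (insert a I)
  then obtain q where q: "degree q \<le> sum m I"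
    "\<And>M. (\<Sum>r\<in>cmp I M. \<Prod>i\<in>I. W (\<beta> i) (r i) * real (r i) ^ m i) = W (sum \<beta> I) M * poly q (real M)"
    by auto
  have pos: "\<beta> a + sum \<beta> I > 0"
    using insert.prems by (simp add: add_pos_nonneg sum_nonneg less_imp_le)
  obtain P where P: "degree P \<le> m a + degree q"
    "\<And>M. (\<Sum>x\<le>M. W (\<beta> a) x * W (sum \<beta> I) (M - x) * real x ^ m a * poly q (real (M - x)))
           = W (\<beta> a + sum \<beta> I) M * poly P (real M)"
    using L2q[OF pos, of "m a" q] by blast
  have "(\<Sum>r\<in>cmp (insert a I) M. \<Prod>i\<in>insert a I. W (\<beta> i) (r i) * real (r i) ^ m i)
        = W (sum \<beta> (insert a I)) M * poly P (real M)" for M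
  proof -
    have "(\<Sum>r\<in>cmp (insert a I) M. \<Prod>i\<in>insert a I. W (\<beta> i) (r i) * real (r i) ^ m i)
      = (\<Sum>x\<le>M. \<Sum>r\<in>cmp I (M - x). \<Prod>i\<in>insert a I. W (\<beta> i) ((r(a := x)) i) * real ((r(a := x)) i) ^ m i)"
      by (rule sum_comp_insert[OF insert.hyps(2,1)])
    also have "\<dots> = (\<Sum>x\<le>M. W (\<beta> a) x * real x ^ m a * (\<Sum>r\<in>cmp I (M - x). \<Prod>i\<in>I. W (\<beta> i) (r i) * real (r i) ^ m i))"
    proof (rule sum.cong[OF refl])
      fix x
      have "(\<Prod>i\<in>insert a I. W (\<beta> i) ((r(a := x)) i) * real ((r(a := x)) i) ^ m i)
         = W (\<beta> a) x * real x ^ m a * (\<Prod>i\<in>I. W (\<beta> i) (r i) * real (r i) ^ m i)" for r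
      proof -
        have "(\<Prod>i\<in>I. W (\<beta> i) ((r(a := x)) i) * real ((r(a := x)) i) ^ m i) = (\<Prod>i\<in>I. W (\<beta> i) (r i) * real (r i) ^ m i)"
          by (rule prod.cong) (use insert.hyps in auto)
        then show ?thesis using insert.hyps by (simp add: prod.insert)
      qed
      then show "(\<Sum>r\<in>cmp I (M - x). \<Prod>i\<in>insert a I. W (\<beta> i) ((r(a := x)) i) * real ((r(a := x)) i) ^ m i)
          = W (\<beta> a) x * real x ^ m a * (\<Sum>r\<in>cmp I (M - x). \<Prod>i\<in>I. W (\<beta> i) (r i) * real (r i) ^ m i)"
        by (simp add: sum_distrib_left)
    qed
    also have "\<dots> = (\<Sum>x\<le>M. W (\<beta> a) x * W (sum \<beta> I) (M - x) * real x ^ m a * poly q (real (M - x)))"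
      by (simp only: q(2) mult_ac)
    also have "\<dots> = W (sum \<beta> (insert a I)) M * poly P (real M)"
      using P(2) insert.hyps by simp
    finally show ?thesis .
  qed
  moreover have "degree P \<le> sum m (insert a I)"
    using P(1) q(1) insert.hyps by simp
  ultimately show ?case by blast
qed


section \<open>Generic inner product facts\<close>

definition ip :: "'a set \<Rightarrow> ('a \<Rightarrow> real) \<Rightarrow> ('a \<Rightarrow> real) \<Rightarrow> ('a \<Rightarrow> real) \<Rightarrow> real" where
  "ip S w f g = (\<Sum>r\<in>S. w r * f r * g r)"

definition orthonormal :: "'a set \<Rightarrow> ('a \<Rightarrow> real) \<Rightarrow> ('a \<Rightarrow> real) set \<Rightarrow> bool" where
  "orthonormal S w B \<longleftrightarrow> (\<forall>P\<in>B. \<forall>Q\<in>B. ip S w P Q = (if P = Q then 1 else 0))"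

lemma ip_comm: "ip S w f g = ip S w g f"
  unfolding ip_def by (simp add: mult_ac)

lemma ip_cong: "(\<And>r. r \<in> S \<Longrightarrow> f r = f' r) \<Longrightarrow> (\<And>r. r \<in> S \<Longrightarrow> g r = g' r) \<Longrightarrow> ip S w f g = ip S w f' g'"
  unfolding ip_def by (rule sum.cong) auto

lemma ip_lin_left: "ip S w (\<lambda>r. a * f r + b * g r) h = a * ip S w f h + b * ip S w g h"
  unfolding ip_def by (simp add: algebra_simps sum.distrib sum_distrib_left)

lemma ip_div_left: "ip S w (\<lambda>r. f r / c) g = ip S w f g / c"
  unfolding ip_def by (simp add: sum_divide_distrib)

lemma ip_div_right: "ip S w f (\<lambda>r. g r / c) = ip S w f g / c"
  unfolding ip_def by (simp add: sum_divide_distrib)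

lemma ip_sum_left: "ip S w (\<lambda>r. \<Sum>P\<in>B. c P * P r) g = (\<Sum>P\<in>B. c P * ip S w P g)"
  unfolding ip_def by (simp add: sum_distrib_left sum_distrib_right sum.swap[of _ S] mult_ac)

lemma ip_sum_right: "ip S w g (\<lambda>r. \<Sum>P\<in>B. c P * P r) = (\<Sum>P\<in>B. c P * ip S w g P)"
  by (subst ip_comm) (simp add: ip_sum_left ip_comm)

lemma ip_self_nonneg: "(\<And>r. r \<in> S \<Longrightarrow> w r > 0) \<Longrightarrow> ip S w f f \<ge> 0"
  unfolding ip_def by (intro sum_nonneg) (simp add: mult.assoc less_imp_le)

lemma ip_self_zero:
  assumes "finite S" "\<And>r. r \<in> S \<Longrightarrow> w r > 0" "ip S w f f = 0" "r \<in> S"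
  shows "f r = 0"
proof -
  have "\<forall>r\<in>S. w r * f r * f r = 0"
    using assms(3) unfolding ip_def
    by (subst sum_nonneg_eq_0_iff[OF assms(1), symmetric]) (auto simp: assms(2) mult.assoc less_imp_le)
  then show ?thesis using assms(2)[OF assms(4)] assms(4) by auto
qed

lemma orth_coeff:
  assumes "finite B" "orthonormal S w B" "Q \<in> B"
  shows "(\<Sum>P\<in>B. c P * ip S w P Q) = c Q"
proof -
  have "(\<Sum>P\<in>B. c P * ip S w P Q) = (\<Sum>P\<in>B. if P = Q then c Q else 0)"
    using assms(2,3) unfolding orthonormal_def by (intro sum.cong) auto
  also have "\<dots> = c Q" using assms(1,3) by simp
  finally show ?thesis .
qed

lemma bessel:
  assumes "finite B" "orthonormal S w B" "\<And>r. r \<in> S \<Longrightarrow> w r > 0"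
  shows "(\<Sum>P\<in>B. (ip S w e P)^2) \<le> ip S w e e"
proof -
  define c where "c P = ip S w e P" for P
  define h where "h r = 1 * e r + (-1) * (\<Sum>P\<in>B. c P * P r)" for r
  have hP: "ip S w P h = 0" if "P \<in> B" for P
  proof -
    have "ip S w P h = 1 * ip S w P e + (-1) * ip S w P (\<lambda>r. \<Sum>P\<in>B. c P * P r)"
      unfolding h_def by (subst ip_comm, subst ip_lin_left) (simp add: ip_comm)
    also have "\<dots> = c P - (\<Sum>Q\<in>B. c Q * ip S w Q P)"
      by (simp add: ip_sum_right ip_comm c_def)
    also have "\<dots> = 0" using orth_coeff[OF assms(1,2) that] by simp
    finally show ?thesis .
  qed
  have "ip S w h h = 1 * ip S w e h + (-1) * ip S w (\<lambda>r. \<Sum>P\<in>B. c P * P r) h"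
    unfolding h_def by (rule ip_lin_left)
  also have "\<dots> = ip S w e h"
    by (simp add: ip_sum_left hP)
  also have "ip S w e h = ip S w e e - (\<Sum>P\<in>B. c P * c P)"
    unfolding h_def by (subst ip_comm, subst ip_lin_left) (simp add: ip_sum_left c_def ip_comm)
  finally have "ip S w h h = ip S w e e - (\<Sum>P\<in>B. (ip S w e P)^2)"
    by (simp add: c_def power2_eq_square)
  moreover have "ip S w h h \<ge> 0" by (rule ip_self_nonneg[of S w, OF assms(3)])
  ultimately show ?thesis by simp
qed

lemma card_orthonormal:
  assumes "finite S" "\<And>r. r \<in> S \<Longrightarrow> w r > 0" "finite B" "orthonormal S w B"
    "\<forall>P\<in>B. \<forall>r. r \<notin> S \<longrightarrow> P r = 0"
  shows "card B \<le> card S"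
proof -
  have loc: "(\<Sum>P\<in>B. w r * P r * P r) \<le> 1" if r: "r \<in> S" for r
  proof -
    define e where "e x = (if x = r then 1 else (0::real))" for x
    have eP: "ip S w e P = w r * P r" for P
    proof -
      have "ip S w e P = (\<Sum>x\<in>S. if x = r then w r * P r else 0)"
        unfolding ip_def by (rule sum.cong) (auto simp: e_def)
      then show ?thesis using r assms(1) by simp
    qed
    have ee: "ip S w e e = w r" using eP[of e] by (simp add: e_def)
    have b: "(\<Sum>P\<in>B. (ip S w e P)^2) \<le> ip S w e e" by (rule bessel) (use assms in auto)
    have e1: "e r = 1" by (simp add: e_def)
    have "(\<Sum>P\<in>B. (w r * P r)^2) \<le> w r" using b by (simp add: eP e1)
    then have "w r * (\<Sum>P\<in>B. w r * P r * P r) \<le> w r * 1"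
      by (simp add: sum_distrib_left power2_eq_square mult_ac)
    then show ?thesis using assms(2)[OF r] by simp
  qed
  have "real (card B) = (\<Sum>P\<in>B. ip S w P P)"
    using assms(4) unfolding orthonormal_def by simp
  also have "\<dots> = (\<Sum>r\<in>S. \<Sum>P\<in>B. w r * P r * P r)"
    unfolding ip_def by (rule sum.swap)
  also have "\<dots> \<le> (\<Sum>r\<in>S. 1)" by (rule sum_mono) (rule loc)
  also have "\<dots> = real (card S)" by simp
  finally show ?thesis by simp
qed

lemma onb_exists:
  assumes S: "finite S" and wpos: "\<And>r. r \<in> S \<Longrightarrow> w r > 0"
    and V0: "V (\<lambda>_. 0)"
    and Vlin: "\<And>f g a b. V f \<Longrightarrow> V g \<Longrightarrow> V (\<lambda>r. a * f r + b * g r)"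
    and Vcong: "\<And>f g. V f \<Longrightarrow> (\<And>r. r \<in> S \<Longrightarrow> f r = g r) \<Longrightarrow> V g"
  shows "\<exists>B. finite B \<and> (\<forall>P\<in>B. V P \<and> (\<forall>r. r \<notin> S \<longrightarrow> P r = 0)) \<and> orthonormal S w B
     \<and> (\<forall>f. V f \<longrightarrow> (\<exists>c. \<forall>r\<in>S. f r = (\<Sum>P\<in>B. c P * P r)))"
proof -
  define Ok where "Ok B \<longleftrightarrow> finite B \<and> (\<forall>P\<in>B. V P \<and> (\<forall>r. r \<notin> S \<longrightarrow> P r = 0)) \<and> orthonormal S w B" for B
  have Vsum: "V (\<lambda>r. \<Sum>P\<in>B. c P * P r)" if "finite B" "\<forall>P\<in>B. V P" for B c
    using that
  proof (induction B rule: finite_induct)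
    case empty then show ?case using V0 by simp
  next
    case (insert Q B)
    have "V (\<lambda>r. c Q * Q r + 1 * (\<Sum>P\<in>B. c P * P r))"
      using insert by (intro Vlin) auto
    then show ?case using insert by simp
  qed
  have "\<exists>k. (\<exists>B. Ok B \<and> card B = k) \<and> (\<forall>k'. (\<exists>B. Ok B \<and> card B = k') \<longrightarrow> k' \<le> k)"
  proof (rule Nat.ex_has_greatest_nat[of _ 0 "card S"])
    show "\<exists>B. Ok B \<and> card B = 0" by (intro exI[of _ "{}"]) (simp add: Ok_def orthonormal_def)
    show "\<forall>y. (\<exists>B. Ok B \<and> card B = y) \<longrightarrow> y \<le> card S"
    proof (intro allI impI)
      fix y assume "\<exists>B. Ok B \<and> card B = y"
      then obtain B where "Ok B" "card B = y" by blast
      then show "y \<le> card S" using card_orthonormal[of S w B] S wpos by (auto simp: Ok_def)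
    qed
  qed
  then obtain B where B: "Ok B" and maxB: "\<And>B'. Ok B' \<Longrightarrow> card B' \<le> card B" by blast
  have span: "\<exists>c. \<forall>r\<in>S. f r = (\<Sum>P\<in>B. c P * P r)" if Vf: "V f" for f
  proof -
    have finB: "finite B" and VB: "\<forall>P\<in>B. V P" and zB: "\<forall>P\<in>B. \<forall>r. r \<notin> S \<longrightarrow> P r = 0"
      and oB: "orthonormal S w B" using B unfolding Ok_def by auto
    define c where "c P = ip S w f P" for P
    define h where "h r = (if r \<in> S then f r - (\<Sum>P\<in>B. c P * P r) else 0)" for r
    have Vh: "V h"
    proof -
      have "V (\<lambda>r. 1 * f r + (-1) * (\<Sum>P\<in>B. c P * P r))"
        by (intro Vlin Vf Vsum finB VB)
      then show ?thesis by (rule Vcong) (simp add: h_def)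
    qed
    have hQ: "ip S w h Q = 0" if "Q \<in> B" for Q
    proof -
      have "ip S w h Q = ip S w (\<lambda>r. 1 * f r + (-1) * (\<Sum>P\<in>B. c P * P r)) Q"
        by (rule ip_cong) (auto simp: h_def)
      also have "\<dots> = c Q - (\<Sum>P\<in>B. c P * ip S w P Q)"
        by (subst ip_lin_left) (simp add: ip_sum_left c_def)
      also have "\<dots> = 0" using orth_coeff[OF finB oB that] by simp
      finally show ?thesis .
    qed
    have hzero: "\<forall>r\<in>S. h r = 0"
    proof (rule ccontr)
      assume "\<not> (\<forall>r\<in>S. h r = 0)"
      then obtain r0 where r0: "r0 \<in> S" "h r0 \<noteq> 0" by auto
      have hh: "ip S w h h > 0"
      proof -
        have "ip S w h h \<ge> 0" by (rule ip_self_nonneg[of S w, OF wpos])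
        moreover have "ip S w h h \<noteq> 0" using ip_self_zero[of S w h r0, OF S wpos _ r0(1)] r0(2) by blast
        ultimately show ?thesis by simp
      qed
      define \<nu> where "\<nu> = sqrt (ip S w h h)"
      have \<nu>: "\<nu> > 0" "\<nu> * \<nu> = ip S w h h" using hh unfolding \<nu>_def by simp_all
      define h' where "h' r = h r / \<nu>" for r
      have h'simp: "h' r = h r / \<nu>" for r by (simp add: h'_def)
      have ih'Q: "ip S w h' Q = 0" if "Q \<in> B" for Q
        unfolding h'_def[abs_def] by (simp add: ip_div_left hQ[OF that])
      have ih'h': "ip S w h' h' = 1"
      proof -
        have "ip S w h' h' = ip S w h h / \<nu> / \<nu>"
          unfolding h'_def[abs_def] by (simp add: ip_div_left ip_div_right)
        also have "\<dots> = (\<nu> * \<nu>) / \<nu> / \<nu>" by (simp only: \<nu>(2))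
        also have "\<dots> = 1" using \<nu>(1) by simp
        finally show ?thesis .
      qed
      have notin: "h' \<notin> B" using ih'Q ih'h' by force
      have "Ok (insert h' B)"
        unfolding Ok_def orthonormal_def
      proof (intro conjI ballI allI impI)
        show "finite (insert h' B)" using finB by simp
      next
        fix P assume "P \<in> insert h' B"
        have "V h'" using Vlin[OF Vh Vh, of "1/\<nu>" 0] by (rule Vcong) (simp add: h'_def)
        then show "V P" using VB \<open>P \<in> insert h' B\<close> by auto
      next
        fix P r assume "P \<in> insert h' B" "r \<notin> S"
        then show "P r = 0" using zB by (auto simp: h'simp h_def)
      next
        fix P Q assume "P \<in> insert h' B" "Q \<in> insert h' B"
        then show "ip S w P Q = (if P = Q then 1 else 0)"
        proof -
          have "ip S w Q h' = 0" if "Q \<in> B" for Q using ih'Q[OF that] by (simp add: ip_comm)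
          then show ?thesis
            using oB ih'Q ih'h' notin \<open>P \<in> insert h' B\<close> \<open>Q \<in> insert h' B\<close> unfolding orthonormal_def
            by auto
        qed
      qed
      then have "card (insert h' B) \<le> card B" by (rule maxB)
      then show False using notin finB by simp
    qed
    show ?thesis
      by (intro exI[of _ c]) (use hzero in \<open>auto simp: h_def\<close>)
  qed
  show ?thesis using B span unfolding Ok_def by blast
qed

lemma kernel_eval:
  assumes "finite B" "orthonormal S w B" "V u"
    and span: "\<forall>f. V f \<longrightarrow> (\<exists>c. \<forall>r\<in>S. f r = (\<Sum>P\<in>B. c P * P r))"
    and rep: "\<And>P. P \<in> B \<Longrightarrow> ip S w u P = P v"
    and s: "s \<in> S"
  shows "u s = (\<Sum>P\<in>B. P s * P v)"
proof -
  obtain c where c: "\<forall>r\<in>S. u r = (\<Sum>P\<in>B. c P * P r)" using span assms(3) by blast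
  have "c Q = Q v" if "Q \<in> B" for Q
  proof -
    have "ip S w u Q = ip S w (\<lambda>r. \<Sum>P\<in>B. c P * P r) Q" by (rule ip_cong) (auto simp: c)
    also have "\<dots> = c Q" by (simp add: ip_sum_left orth_coeff[OF assms(1,2) that])
    finally show ?thesis using rep[OF that] by simp
  qed
  then show ?thesis using c s by (simp add: mult.commute)
qed

lemma kernel_repro:
  assumes "finite B" "orthonormal S w B" "V h"
    and span: "\<forall>f. V f \<longrightarrow> (\<exists>c. \<forall>r\<in>S. f r = (\<Sum>P\<in>B. c P * P r))"
    and v: "v \<in> S"
  shows "ip S w (\<lambda>r. \<Sum>P\<in>B. P v * P r) h = h v"
proof -
  obtain c where c: "\<forall>r\<in>S. h r = (\<Sum>P\<in>B. c P * P r)" using span assms(3) by blast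
  have cQ: "ip S w Q h = c Q" if "Q \<in> B" for Q
  proof -
    have "ip S w Q h = ip S w (\<lambda>r. \<Sum>P\<in>B. c P * P r) Q"
      by (subst ip_comm, rule ip_cong) (auto simp: c)
    also have "\<dots> = c Q" by (simp add: ip_sum_left orth_coeff[OF assms(1,2) that])
    finally show ?thesis .
  qed
  have "ip S w (\<lambda>r. \<Sum>P\<in>B. P v * P r) h = (\<Sum>P\<in>B. P v * c P)"
    by (simp add: ip_sum_left cQ)
  also have "\<dots> = h v" using c v by (simp add: mult.commute)
  finally show ?thesis .
qed


lemma V_sum:
  fixes V :: "('a \<Rightarrow> real) \<Rightarrow> bool" and c :: "('a \<Rightarrow> real) \<Rightarrow> real"
  assumes V0: "V (\<lambda>_. 0)"
    and Vlin: "\<And>f g a b. V f \<Longrightarrow> V g \<Longrightarrow> V (\<lambda>r. a * f r + b * g r)"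
    and "finite B" "\<forall>P\<in>B. V P"
  shows "V (\<lambda>r. \<Sum>P\<in>B. c P * P r)"
  using assms(3,4)
proof (induction B rule: finite_induct)
  case empty then show ?case using V0 by simp
next
  case (insert Q B)
  have "V (\<lambda>r. c Q * Q r + 1 * (\<Sum>P\<in>B. c P * P r))"
    using insert by (intro Vlin) auto
  then show ?case using insert by simp
qed

lemma simplex_cmp: "simplex d N = cmp {..<d} N"
  unfolding simplex_def cmp_def by auto

lemma finite_simplex: "finite (simplex d N)"
  by (simp add: simplex_cmp finite_comp)

lemma inner_DM_ip: "inner_DM d \<beta> N = ip (simplex d N) (DM d \<beta> N)"
  unfolding inner_DM_def[abs_def] ip_def by simp

lemma DM_eq: "DM d \<beta> N r = fact N / pochhammer (vabs d \<beta>) N * (\<Prod>i<d. W (\<beta> i) (r i))"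
  unfolding DM_def W_def prod_dividef by (simp only: divide_inverse mult_ac)

lemma W_pos: "A > 0 \<Longrightarrow> W A x > 0"
  unfolding W_def by (simp add: pochhammer_pos)

lemma DM_pos:
  assumes "\<forall>i<d. \<beta> i > 0" "vabs d \<beta> > 0"
  shows "DM d \<beta> N r > 0"
  unfolding DM_eq using assms
  by (intro mult_pos_pos divide_pos_pos prod_pos) (auto simp: W_pos pochhammer_pos)

lemma polyfun_cong: "polyfun d N n f \<Longrightarrow> (\<And>r. r \<in> simplex d N \<Longrightarrow> f r = g r) \<Longrightarrow> polyfun d N n g"
  unfolding polyfun_def by metis

lemma polyfun_0: "polyfun d N n (\<lambda>_. 0)"
  unfolding polyfun_def by (intro exI[of _ "\<lambda>_. 0"]) simp

lemma polyfun_lin: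
  assumes "polyfun d N n f" "polyfun d N n g"
  shows "polyfun d N n (\<lambda>r. a * f r + b * g r)"
proof -
  obtain c1 where c1: "\<forall>r\<in>simplex d N. f r = (\<Sum>m\<in>exps d n. c1 m * (\<Prod>i<d. real (r i) ^ m i))"
    using assms(1) unfolding polyfun_def by blast
  obtain c2 where c2: "\<forall>r\<in>simplex d N. g r = (\<Sum>m\<in>exps d n. c2 m * (\<Prod>i<d. real (r i) ^ m i))"
    using assms(2) unfolding polyfun_def by blast
  have "\<forall>r\<in>simplex d N. a * f r + b * g r = (\<Sum>m\<in>exps d n. (a * c1 m + b * c2 m) * (\<Prod>i<d. real (r i) ^ m i))"
    using c1 c2 by (simp add: sum.distrib sum_distrib_left distrib_right mult_ac)
  then show ?thesis unfolding polyfun_def by - (rule exI, assumption)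
qed

lemma Vspace_0: "Vspace d \<beta> N n (\<lambda>_. 0)"
  unfolding Vspace_def inner_DM_def by (simp add: polyfun_0)

lemma Vspace_lin:
  assumes "Vspace d \<beta> N n f" "Vspace d \<beta> N n g"
  shows "Vspace d \<beta> N n (\<lambda>r. a * f r + b * g r)"
  using assms unfolding Vspace_def inner_DM_ip by (simp add: polyfun_lin ip_lin_left)

lemma Vspace_cong:
  assumes "Vspace d \<beta> N n f" "\<And>r. r \<in> simplex d N \<Longrightarrow> f r = g r"
  shows "Vspace d \<beta> N n g"
proof -
  have "polyfun d N n g" using assms polyfun_cong unfolding Vspace_def by blast
  moreover have "inner_DM d \<beta> N g h = inner_DM d \<beta> N f h" for h
    unfolding inner_DM_ip by (rule ip_cong) (auto simp: assms(2))
  ultimately show ?thesis using assms(1) unfolding Vspace_def by simp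
qed

lemma ONB_exists:
  assumes "\<forall>i<d. \<beta> i > 0" "vabs d \<beta> > 0"
  shows "is_ONB d \<beta> N n (SOME B. is_ONB d \<beta> N n B)"
proof (rule someI_ex)
  have "\<exists>B. finite B \<and> (\<forall>P\<in>B. Vspace d \<beta> N n P \<and> (\<forall>r. r \<notin> simplex d N \<longrightarrow> P r = 0))
     \<and> orthonormal (simplex d N) (DM d \<beta> N) B
     \<and> (\<forall>f. Vspace d \<beta> N n f \<longrightarrow> (\<exists>c. \<forall>r\<in>simplex d N. f r = (\<Sum>P\<in>B. c P * P r)))"
  proof (rule onb_exists)
    show "finite (simplex d N)" by (rule finite_simplex)
    show "\<And>r. r \<in> simplex d N \<Longrightarrow> DM d \<beta> N r > 0" using DM_pos[OF assms] by blast
  qed (auto intro: Vspace_0 Vspace_lin Vspace_cong)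
  then show "\<exists>B. is_ONB d \<beta> N n B"
    unfolding is_ONB_def orthonormal_def inner_DM_ip by blast
qed

lemma ONB_props:
  assumes "is_ONB d \<beta> N n B"
  shows "finite B" "\<And>P. P \<in> B \<Longrightarrow> Vspace d \<beta> N n P" "orthonormal (simplex d N) (DM d \<beta> N) B"
    "\<forall>f. Vspace d \<beta> N n f \<longrightarrow> (\<exists>c. \<forall>r\<in>simplex d N. f r = (\<Sum>P\<in>B. c P * P r))"
  using assms unfolding is_ONB_def orthonormal_def inner_DM_ip by auto

lemma Vspace_sum:
  assumes "finite B" "\<forall>P\<in>B. Vspace d \<beta> N n P"
  shows "Vspace d \<beta> N n (\<lambda>r. \<Sum>P\<in>B. c P * P r)"
  by (rule V_sum[OF _ _ assms]) (auto intro: Vspace_0 Vspace_lin)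

lemma finite_exps: "finite (exps d n)"
proof -
  have "exps d n \<subseteq> (\<Union>t\<le>n. cmp {..<d} t)"
    unfolding exps_def cmp_def by auto
  moreover have "finite (\<Union>t\<le>n. cmp {..<d} t)" by (simp add: finite_comp)
  ultimately show ?thesis by (rule finite_subset)
qed

lemma polyfun_univar:
  assumes "j < d" "degree q \<le> n"
  shows "polyfun d N n (\<lambda>r. poly q (real (r j)))"
proof -
  define \<iota> where "\<iota> t = (\<lambda>i. if i = j then t else (0::nat))" for t
  define c where "c m = (if (\<forall>i. i \<noteq> j \<longrightarrow> m i = 0) then coeff q (m j) else 0)" for m :: "nat \<Rightarrow> nat"
  have img: "\<iota> ` {..n} \<subseteq> exps d n"
    using assms(1) unfolding exps_def \<iota>_def by (auto simp: sum.delta)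
  have "(\<Sum>m\<in>exps d n. c m * (\<Prod>i<d. real (r i) ^ m i)) = poly q (real (r j))" for r
  proof -
    have "(\<Sum>m\<in>exps d n. c m * (\<Prod>i<d. real (r i) ^ m i)) = (\<Sum>m\<in>\<iota> ` {..n}. c m * (\<Prod>i<d. real (r i) ^ m i))"
    proof (rule sum.mono_neutral_right[OF finite_exps img], rule ballI)
      fix m assume m: "m \<in> exps d n - \<iota> ` {..n}"
      show "c m * (\<Prod>i<d. real (r i) ^ m i) = 0"
      proof (cases "\<forall>i. i \<noteq> j \<longrightarrow> m i = 0")
        case True
        then have "m = \<iota> (m j)" unfolding \<iota>_def by auto
        moreover have "m j \<le> n"
        proof -
          have "m j \<le> (\<Sum>i<d. m i)" using assms(1) by (intro member_le_sum) auto
          then show ?thesis using m unfolding exps_def by auto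
        qed
        ultimately show ?thesis using m by auto
      next
        case False then show ?thesis by (simp only: c_def if_not_P[OF False] if_False mult_zero_left)
      qed
    qed
    also have "\<dots> = (\<Sum>t\<le>n. c (\<iota> t) * (\<Prod>i<d. real (r i) ^ \<iota> t i))"
      by (rule sum.reindex_cong[where l=\<iota>]) (auto simp: inj_on_def \<iota>_def fun_eq_iff)
    also have "\<dots> = (\<Sum>t\<le>n. coeff q t * real (r j) ^ t)"
    proof (rule sum.cong[OF refl])
      fix t
      have "(\<Prod>i<d. real (r i) ^ \<iota> t i) = (\<Prod>i<d. if i = j then real (r j) ^ t else 1)"
        by (rule prod.cong) (auto simp: \<iota>_def)
      also have "\<dots> = real (r j) ^ t" using assms(1) by (simp add: prod.delta)
      finally show "c (\<iota> t) * (\<Prod>i<d. real (r i) ^ \<iota> t i) = coeff q t * real (r j) ^ t"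
        by (simp add: c_def \<iota>_def)
    qed
    also have "\<dots> = poly q (real (r j))"
    proof -
      have "(\<Sum>t\<le>n. coeff q t * real (r j) ^ t) = (\<Sum>t\<le>degree q. coeff q t * real (r j) ^ t)"
        by (rule sum.mono_neutral_right) (use assms(2) in \<open>auto simp: coeff_eq_0\<close>)
      then show ?thesis by (simp add: poly_altdef)
    qed
    finally show ?thesis .
  qed
  then show ?thesis unfolding polyfun_def by (intro exI[of _ c]) simp
qed

lemma pt2_simplex: "k \<le> N \<Longrightarrow> pt2 N k \<in> simplex 2 N"
  unfolding simplex_def pt2_def by (simp add: numeral_2_eq_2)

lemma pt2_inv: "r \<in> simplex 2 N \<Longrightarrow> pt2 N (r 0) = r"
proof -
  assume r: "r \<in> simplex 2 N"
  then have "r 0 + r 1 = N" "\<forall>i\<ge>2. r i = 0" unfolding simplex_def by (auto simp: numeral_2_eq_2)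
  then show "pt2 N (r 0) = r" unfolding pt2_def
    by (auto simp: fun_eq_iff)
qed

lemma simplex2_le: "r \<in> simplex 2 N \<Longrightarrow> r 0 \<le> N"
  unfolding simplex_def by (auto simp: numeral_2_eq_2)

lemma sum_simplex2: "(\<Sum>r\<in>simplex 2 N. G r) = (\<Sum>k\<le>N. G (pt2 N k))"
  by (rule sum.reindex_bij_witness[where i="pt2 N" and j="\<lambda>r. r 0"])
     (auto simp: pt2_inv simplex2_le pt2_simplex, simp add: pt2_def)

lemma polyfun2_univar:
  assumes "polyfun 2 N n h"
  shows "\<exists>q. degree q \<le> n \<and> (\<forall>k\<le>N. h (pt2 N k) = poly q (real k))"
proof -
  obtain c where c: "\<forall>r\<in>simplex 2 N. h r = (\<Sum>m\<in>exps 2 n. c m * (\<Prod>i<2. real (r i) ^ m i))"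
    using assms unfolding polyfun_def by blast
  define q where "q = (\<Sum>m\<in>exps 2 n. smult (c m) (monom 1 (m 0) * [:real N, -1:] ^ (m 1)))"
  have "degree q \<le> n"
    unfolding q_def
  proof (rule degree_sum_le[OF finite_exps])
    fix m assume m: "m \<in> exps 2 n"
    then have mn: "m 0 + m 1 \<le> n" unfolding exps_def by (simp add: numeral_2_eq_2)
    have "degree (monom (1::real) (m 0) * [:real N, -1:] ^ (m 1)) \<le> m 0 + m 1 * 1"
      by (rule order_trans[OF degree_mult_le], rule add_mono[OF degree_monom_le],
          rule order_trans[OF degree_power_le]) simp
    then show "degree (smult (c m) (monom 1 (m 0) * [:real N, -1:] ^ (m 1))) \<le> n"
      using mn degree_smult_le order_trans by fastforce
  qed
  moreover have "h (pt2 N k) = poly q (real k)" if k: "k \<le> N" for k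
  proof -
    have "h (pt2 N k) = (\<Sum>m\<in>exps 2 n. c m * (real k ^ m 0 * real (N - k) ^ m 1))"
      using c pt2_simplex[OF k] by (simp add: pt2_def numeral_2_eq_2 mult_ac)
    also have "\<dots> = poly q (real k)"
      unfolding q_def poly_sum using k by (simp add: poly_monom of_nat_diff)
    finally show ?thesis .
  qed
  ultimately show ?thesis by blast
qed


section \<open>Conditional expectation\<close>

lemma upd_in_simplex:
  assumes "j < d" "r \<in> cmp ({..<d} - {j}) (N - k)" "k \<le> N"
  shows "r(j := k) \<in> simplex d N"
proof -
  have e: "{..<d} = insert j ({..<d} - {j})" using assms(1) by auto
  show ?thesis unfolding simplex_cmp
    by (subst e, subst comp_insert) (use assms in auto)
qed

lemma sum_simplex_split:
  assumes "j < d"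
  shows "(\<Sum>r\<in>simplex d N. G r) = (\<Sum>k\<le>N. \<Sum>r\<in>cmp ({..<d} - {j}) (N - k). G (r(j := k)))"
proof -
  have e: "{..<d} = insert j ({..<d} - {j})" using assms(1) by auto
  show ?thesis unfolding simplex_cmp
    by (subst e, rule sum_comp_insert) auto
qed

lemma vabs_split: "j < d \<Longrightarrow> vabs d \<alpha> - \<alpha> j = sum \<alpha> ({..<d} - {j})"
  unfolding vabs_def by (simp add: sum_diff1)

lemma DM2_eq:
  assumes "k \<le> N"
  shows "DM 2 (\<lambda>i. if i = 0 then a else b) N (pt2 N k) = fact N / pochhammer (a + b) N * (W a k * W b (N - k))"
  using assms unfolding DM_eq by (simp add: vabs_def numeral_2_eq_2 pt2_def)

lemma cond_mono:
  assumes j: "j < d" and pos: "\<forall>i<d. \<alpha> i > 0"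
  shows "\<exists>p. degree p \<le> sum m {..<d} \<and> (\<forall>k\<le>N.
     (\<Sum>r\<in>cmp ({..<d} - {j}) (N - k). DM d \<alpha> N (r(j := k)) * (\<Prod>i<d. real ((r(j := k)) i) ^ m i))
     = DM 2 (\<lambda>i. if i = 0 then \<alpha> j else vabs d \<alpha> - \<alpha> j) N (pt2 N k) * poly p (real k))"
proof -
  define I where "I = {..<d} - {j}"
  have Ifin: "finite I" and jI: "j \<notin> I" and insI: "{..<d} = insert j I" using j by (auto simp: I_def)
  obtain q where q: "degree q \<le> sum m I"
    "\<And>M. (\<Sum>r\<in>cmp I M. \<Prod>i\<in>I. W (\<alpha> i) (r i) * real (r i) ^ m i) = W (sum \<alpha> I) M * poly q (real M)"
    using LI[OF Ifin, of \<alpha> m] pos by (auto simp: I_def)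
  define C0 where "C0 = fact N / pochhammer (vabs d \<alpha>) N"
  have sI: "vabs d \<alpha> - \<alpha> j = sum \<alpha> I" unfolding I_def by (rule vabs_split[OF j])
  have vab: "\<alpha> j + (vabs d \<alpha> - \<alpha> j) = vabs d \<alpha>" by simp
  define p where "p = monom 1 (m j) * pcompose q [:real N, -1:]"
  have degp: "degree p \<le> sum m {..<d}"
  proof -
    have "degree p \<le> m j + degree q * 1"
      unfolding p_def
      by (rule order_trans[OF degree_mult_le], rule add_mono[OF degree_monom_le],
          rule order_trans[OF degree_pcompose_le]) simp
    also have "\<dots> \<le> m j + sum m I" using q(1) by simp
    also have "\<dots> = sum m {..<d}" using insI jI Ifin by simp
    finally show ?thesis .
  qed
  have "(\<Sum>r\<in>cmp I (N - k). DM d \<alpha> N (r(j := k)) * (\<Prod>i<d. real ((r(j := k)) i) ^ m i))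
     = DM 2 (\<lambda>i. if i = 0 then \<alpha> j else vabs d \<alpha> - \<alpha> j) N (pt2 N k) * poly p (real k)" if k: "k \<le> N" for k
  proof -
    have pw: "DM d \<alpha> N (r(j := k)) * (\<Prod>i<d. real ((r(j := k)) i) ^ m i)
        = C0 * (W (\<alpha> j) k * real k ^ m j) * (\<Prod>i\<in>I. W (\<alpha> i) (r i) * real (r i) ^ m i)" for r
    proof -
      have "DM d \<alpha> N (r(j := k)) * (\<Prod>i<d. real ((r(j := k)) i) ^ m i)
          = C0 * (\<Prod>i\<in>insert j I. W (\<alpha> i) ((r(j := k)) i) * real ((r(j := k)) i) ^ m i)"
        unfolding DM_eq C0_def insI[symmetric] by (simp add: prod.distrib)
      also have "\<dots> = C0 * ((W (\<alpha> j) k * real k ^ m j) * (\<Prod>i\<in>I. W (\<alpha> i) (r i) * real (r i) ^ m i))"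
      proof -
        have "(\<Prod>i\<in>I. W (\<alpha> i) ((r(j := k)) i) * real ((r(j := k)) i) ^ m i) = (\<Prod>i\<in>I. W (\<alpha> i) (r i) * real (r i) ^ m i)"
          by (rule prod.cong) (use jI in auto)
        then show ?thesis using Ifin jI by simp
      qed
      finally show ?thesis by (simp add: mult_ac)
    qed
    have "(\<Sum>r\<in>cmp I (N - k). DM d \<alpha> N (r(j := k)) * (\<Prod>i<d. real ((r(j := k)) i) ^ m i))
        = (\<Sum>r\<in>cmp I (N - k). C0 * (W (\<alpha> j) k * real k ^ m j) * (\<Prod>i\<in>I. W (\<alpha> i) (r i) * real (r i) ^ m i))"
      by (rule sum.cong[OF refl], rule pw)
    also have "\<dots> = C0 * (W (\<alpha> j) k * real k ^ m j) * (\<Sum>r\<in>cmp I (N - k). \<Prod>i\<in>I. W (\<alpha> i) (r i) * real (r i) ^ m i)"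
      by (simp add: sum_distrib_left)
    also have "\<dots> = C0 * (W (\<alpha> j) k * real k ^ m j) * (W (sum \<alpha> I) (N - k) * poly q (real (N - k)))"
      by (simp only: q(2))
    also have "\<dots> = DM 2 (\<lambda>i. if i = 0 then \<alpha> j else vabs d \<alpha> - \<alpha> j) N (pt2 N k) * poly p (real k)"
      unfolding DM2_eq[OF k] vab sI[symmetric] using k
      by (simp add: C0_def p_def poly_pcompose poly_monom of_nat_diff sI mult_ac)
    finally show ?thesis .
  qed
  then show ?thesis using degp unfolding I_def by blast
qed

lemma cond:
  assumes j: "j < d" and pos: "\<forall>i<d. \<alpha> i > 0" and f: "polyfun d N n f"
  shows "\<exists>p. degree p \<le> n \<and> (\<forall>k\<le>N.
     (\<Sum>r\<in>cmp ({..<d} - {j}) (N - k). DM d \<alpha> N (r(j := k)) * f (r(j := k)))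
     = DM 2 (\<lambda>i. if i = 0 then \<alpha> j else vabs d \<alpha> - \<alpha> j) N (pt2 N k) * poly p (real k))"
proof -
  let ?w2 = "DM 2 (\<lambda>i. if i = 0 then \<alpha> j else vabs d \<alpha> - \<alpha> j) N"
  let ?I = "{..<d} - {j}"
  obtain c where c: "\<forall>r\<in>simplex d N. f r = (\<Sum>m\<in>exps d n. c m * (\<Prod>i<d. real (r i) ^ m i))"
    using f unfolding polyfun_def by blast
  have "\<forall>m\<in>exps d n. \<exists>p. degree p \<le> n \<and> (\<forall>k\<le>N.
     (\<Sum>r\<in>cmp ?I (N - k). DM d \<alpha> N (r(j := k)) * (\<Prod>i<d. real ((r(j := k)) i) ^ m i))
     = ?w2 (pt2 N k) * poly p (real k))"
  proof
    fix m assume "m \<in> exps d n"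
    then have "sum m {..<d} \<le> n" unfolding exps_def by simp
    moreover obtain p where "degree p \<le> sum m {..<d}" and "\<forall>k\<le>N.
     (\<Sum>r\<in>cmp ?I (N - k). DM d \<alpha> N (r(j := k)) * (\<Prod>i<d. real ((r(j := k)) i) ^ m i))
     = ?w2 (pt2 N k) * poly p (real k)"
      using cond_mono[OF j pos, of m N] by blast
    ultimately show "\<exists>p. degree p \<le> n \<and> (\<forall>k\<le>N.
     (\<Sum>r\<in>cmp ?I (N - k). DM d \<alpha> N (r(j := k)) * (\<Prod>i<d. real ((r(j := k)) i) ^ m i))
     = ?w2 (pt2 N k) * poly p (real k))"
      by (intro exI[of _ p]) simp
  qed
  then have "\<exists>pm. \<forall>m\<in>exps d n. degree (pm m) \<le> n \<and> (\<forall>k\<le>N.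
     (\<Sum>r\<in>cmp ?I (N - k). DM d \<alpha> N (r(j := k)) * (\<Prod>i<d. real ((r(j := k)) i) ^ m i))
     = ?w2 (pt2 N k) * poly (pm m) (real k))"
    by (rule bchoice)
  then obtain pm where pm0: "\<forall>m\<in>exps d n. degree (pm m) \<le> n \<and> (\<forall>k\<le>N.
     (\<Sum>r\<in>cmp ?I (N - k). DM d \<alpha> N (r(j := k)) * (\<Prod>i<d. real ((r(j := k)) i) ^ m i))
     = ?w2 (pt2 N k) * poly (pm m) (real k))" by (elim exE)
  have pm: "\<And>m. m \<in> exps d n \<Longrightarrow> degree (pm m) \<le> n"
    "\<And>m k. m \<in> exps d n \<Longrightarrow> k \<le> N \<Longrightarrow>
     (\<Sum>r\<in>cmp ?I (N - k). DM d \<alpha> N (r(j := k)) * (\<Prod>i<d. real ((r(j := k)) i) ^ m i))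
     = ?w2 (pt2 N k) * poly (pm m) (real k)"
    using pm0 by blast+
  define p where "p = (\<Sum>m\<in>exps d n. smult (c m) (pm m))"
  have degp: "degree p \<le> n"
    unfolding p_def
    by (rule degree_sum_le[OF finite_exps]) (rule order_trans[OF degree_smult_le pm(1)])
  have "(\<Sum>r\<in>cmp ?I (N - k). DM d \<alpha> N (r(j := k)) * f (r(j := k))) = ?w2 (pt2 N k) * poly p (real k)"
    if k: "k \<le> N" for k
  proof -
    have "(\<Sum>r\<in>cmp ?I (N - k). DM d \<alpha> N (r(j := k)) * f (r(j := k)))
       = (\<Sum>r\<in>cmp ?I (N - k). \<Sum>m\<in>exps d n. c m * (DM d \<alpha> N (r(j := k)) * (\<Prod>i<d. real ((r(j := k)) i) ^ m i)))"
    proof (rule sum.cong[OF refl])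
      fix r assume "r \<in> cmp ?I (N - k)"
      then have "r(j := k) \<in> simplex d N" by (rule upd_in_simplex[OF j _ k])
      then show "DM d \<alpha> N (r(j := k)) * f (r(j := k))
         = (\<Sum>m\<in>exps d n. c m * (DM d \<alpha> N (r(j := k)) * (\<Prod>i<d. real ((r(j := k)) i) ^ m i)))"
        using c by (simp add: sum_distrib_left mult_ac)
    qed
    also have "\<dots> = (\<Sum>m\<in>exps d n. c m * (\<Sum>r\<in>cmp ?I (N - k). DM d \<alpha> N (r(j := k)) * (\<Prod>i<d. real ((r(j := k)) i) ^ m i)))"
      by (simp only: sum_distrib_left) (rule sum.swap)
    also have "\<dots> = (\<Sum>m\<in>exps d n. c m * (?w2 (pt2 N k) * poly (pm m) (real k)))"
    proof (rule sum.cong[OF refl])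
      fix m assume m: "m \<in> exps d n"
      show "c m * (\<Sum>r\<in>cmp ?I (N - k). DM d \<alpha> N (r(j := k)) * (\<Prod>i<d. real ((r(j := k)) i) ^ m i))
          = c m * (?w2 (pt2 N k) * poly (pm m) (real k))"
        by (simp only: pm(2)[OF m k])
    qed
    also have "\<dots> = ?w2 (pt2 N k) * poly p (real k)"
      by (simp add: p_def poly_sum sum_distrib_right mult_ac)
    finally show ?thesis .
  qed
  then show ?thesis using degp by blast
qed


lemma cmp_zero: "finite I \<Longrightarrow> cmp I 0 = {\<lambda>_. 0}"
  unfolding cmp_def by (auto simp: fun_eq_iff)

lemma W_0[simp]: "W A 0 = 1" by (simp add: W_def)

lemma transfer:
  assumes j: "j < d" and pos: "\<forall>i<d. \<alpha> i > 0" and f: "polyfun d N n f"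
  shows "\<exists>p. degree p \<le> n
    \<and> (\<forall>q. ip (simplex d N) (DM d \<alpha> N) (\<lambda>r. poly q (real (r j))) f
          = ip (simplex 2 N) (DM 2 (\<lambda>i. if i = 0 then \<alpha> j else vabs d \<alpha> - \<alpha> j) N) (\<lambda>r. poly q (real (r 0))) (\<lambda>r. poly p (real (r 0))))
    \<and> DM 2 (\<lambda>i. if i = 0 then \<alpha> j else vabs d \<alpha> - \<alpha> j) N (pt2 N N) * poly p (real N)
        = DM d \<alpha> N (\<lambda>i. if i = j then N else 0) * f (\<lambda>i. if i = j then N else 0)"
proof -
  let ?w2 = "DM 2 (\<lambda>i. if i = 0 then \<alpha> j else vabs d \<alpha> - \<alpha> j) N"
  let ?I = "{..<d} - {j}"
  obtain p where p: "degree p \<le> n" "\<And>k. k \<le> N \<Longrightarrow>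
     (\<Sum>r\<in>cmp ?I (N - k). DM d \<alpha> N (r(j := k)) * f (r(j := k))) = ?w2 (pt2 N k) * poly p (real k)"
    using cond[OF j pos f] by blast
  have tr: "ip (simplex d N) (DM d \<alpha> N) (\<lambda>r. poly q (real (r j))) f
          = ip (simplex 2 N) ?w2 (\<lambda>r. poly q (real (r 0))) (\<lambda>r. poly p (real (r 0)))" for q
  proof -
    have "ip (simplex d N) (DM d \<alpha> N) (\<lambda>r. poly q (real (r j))) f
       = (\<Sum>k\<le>N. \<Sum>r\<in>cmp ?I (N - k). DM d \<alpha> N (r(j := k)) * poly q (real ((r(j := k)) j)) * f (r(j := k)))"
      unfolding ip_def by (rule sum_simplex_split[OF j])
    also have "\<dots> = (\<Sum>k\<le>N. poly q (real k) * (\<Sum>r\<in>cmp ?I (N - k). DM d \<alpha> N (r(j := k)) * f (r(j := k))))"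
      by (simp add: sum_distrib_left mult_ac)
    also have "\<dots> = (\<Sum>k\<le>N. poly q (real k) * (?w2 (pt2 N k) * poly p (real k)))"
      by (rule sum.cong[OF refl]) (simp add: p(2))
    also have "\<dots> = ip (simplex 2 N) ?w2 (\<lambda>r. poly q (real (r 0))) (\<lambda>r. poly p (real (r 0)))"
      unfolding ip_def sum_simplex2 by (simp add: pt2_def mult_ac)
    finally show ?thesis .
  qed
  have "(\<Sum>r\<in>cmp ?I (N - N). DM d \<alpha> N (r(j := N)) * f (r(j := N))) = ?w2 (pt2 N N) * poly p (real N)"
    by (rule p(2)) simp
  moreover have "(\<lambda>_. 0::nat)(j := N) = (\<lambda>i. if i = j then N else 0)" by auto
  ultimately have "?w2 (pt2 N N) * poly p (real N) = DM d \<alpha> N (\<lambda>i. if i = j then N else 0) * f (\<lambda>i. if i = j then N else 0)"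
    by (simp add: cmp_zero)
  then show ?thesis using p(1) tr by blast
qed


theorem proposition3p2:
  fixes d N n j :: nat and \<alpha> :: "nat \<Rightarrow> real" and s :: "nat \<Rightarrow> nat"
  assumes "d \<ge> 2"
    and "\<forall>i<d. \<alpha> i > 0"
    and "j < d"
    and "s \<in> simplex d N"
    and "n \<le> N"
  shows "hahn_kernel d \<alpha> N n s (\<lambda>i. if i = j then N else 0)
         = hahn2 (\<alpha> j) (vabs d \<alpha> - \<alpha> j) N n (s j) N"
proof -
  note d2 = assms(1) and pos = assms(2) and j = assms(3) and s = assms(4)
  define \<beta>2 where "\<beta>2 = (\<lambda>i::nat. if i = 0 then \<alpha> j else vabs d \<alpha> - \<alpha> j)"
  define v where "v = (\<lambda>i::nat. if i = j then N else 0)"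
  define v2 where "v2 = pt2 N N"
  let ?Sd = "simplex d N" and ?S2 = "simplex 2 N"
  let ?wd = "DM d \<alpha> N" and ?w2 = "DM 2 \<beta>2 N"
  have bpos: "vabs d \<alpha> - \<alpha> j > 0"
  proof -
    obtain i where i: "i < d" "i \<noteq> j"
    proof (cases "j = 0")
      case True then show ?thesis using d2 that[of 1] by simp
    next
      case False then show ?thesis using d2 that[of 0] by simp
    qed
    have "vabs d \<alpha> - \<alpha> j = sum \<alpha> ({..<d} - {j})" by (rule vabs_split[OF j])
    also have "\<dots> > 0" using i pos by (intro sum_pos) auto
    finally show ?thesis .
  qed
  have vpos: "vabs d \<alpha> > 0"
  proof -
    have "vabs d \<alpha> = \<alpha> j + (vabs d \<alpha> - \<alpha> j)" by simp
    also have "\<dots> > 0" using bpos pos j by (intro add_pos_pos) auto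
    finally show ?thesis .
  qed
  have vabs2: "vabs 2 \<beta>2 = vabs d \<alpha>" unfolding \<beta>2_def vabs_def by (simp add: numeral_2_eq_2)
  have pos2: "\<forall>i<2. \<beta>2 i > 0" unfolding \<beta>2_def using pos j bpos by auto
  define B2 where "B2 = (SOME B. is_ONB 2 \<beta>2 N n B)"
  define Bd where "Bd = (SOME B. is_ONB d \<alpha> N n B)"
  have ONB2: "is_ONB 2 \<beta>2 N n B2" unfolding B2_def by (rule ONB_exists[OF pos2]) (simp add: vabs2 vpos)
  have ONBd: "is_ONB d \<alpha> N n Bd" unfolding Bd_def by (rule ONB_exists[OF pos vpos])
  note B2p = ONB_props[OF ONB2] and Bdp = ONB_props[OF ONBd]
  define K where "K r = (\<Sum>P\<in>B2. P v2 * P r)" for r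
  have VK: "Vspace 2 \<beta>2 N n K"
    unfolding K_def[abs_def] by (rule Vspace_sum) (use B2p in auto)
  obtain qK where qK: "degree qK \<le> n" "\<And>k. k \<le> N \<Longrightarrow> K (pt2 N k) = poly qK (real k)"
    using polyfun2_univar[of N n K] VK unfolding Vspace_def by blast
  define g where "g r = poly qK (real (r j))" for r
  have sj: "s j \<le> N"
  proof -
    have "s j \<le> (\<Sum>i<d. s i)" by (rule member_le_sum) (use j in auto)
    then show ?thesis using s unfolding simplex_def by simp
  qed
  have hahn2_eq: "hahn2 (\<alpha> j) (vabs d \<alpha> - \<alpha> j) N n (s j) N = g s"
  proof -
    have "hahn2 (\<alpha> j) (vabs d \<alpha> - \<alpha> j) N n (s j) N = K (pt2 N (s j))"
      unfolding hahn2_def hahn_kernel_def Let_def K_def v2_def B2_def[symmetric] \<beta>2_def[symmetric]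
      by (simp add: mult.commute)
    also have "\<dots> = g s" using qK(2)[OF sj] by (simp add: g_def)
    finally show ?thesis .
  qed
  have Kcong: "K r = poly qK (real (r 0))" if "r \<in> ?S2" for r
    using qK(2)[OF simplex2_le[OF that]] pt2_inv[OF that] by simp
  have wv: "?w2 v2 = ?wd v" "?wd v > 0"
  proof -
    have "(\<Prod>i<d. W (\<alpha> i) (v i)) = (\<Prod>i<d. if i = j then W (\<alpha> j) N else 1)"
      by (rule prod.cong) (auto simp: v_def)
    also have "\<dots> = W (\<alpha> j) N" using j by (simp add: prod.delta)
    finally have "(\<Prod>i<d. W (\<alpha> i) (v i)) = W (\<alpha> j) N" .
    moreover have "?w2 v2 = fact N / pochhammer (\<alpha> j + (vabs d \<alpha> - \<alpha> j)) N * (W (\<alpha> j) N * W (vabs d \<alpha> - \<alpha> j) (N - N))"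
      unfolding v2_def \<beta>2_def by (rule DM2_eq) simp
    ultimately show "?w2 v2 = ?wd v"
      unfolding DM_eq[of d \<alpha> N v] by simp
    show "?wd v > 0" by (rule DM_pos[OF pos vpos])
  qed
  have Vg: "Vspace d \<alpha> N n g"
    unfolding Vspace_def
  proof (intro conjI impI allI)
    show "polyfun d N n g" unfolding g_def[abs_def] by (rule polyfun_univar[OF j qK(1)])
  next
    fix h assume n0: "0 < n" and h: "polyfun d N (n - 1) h"
    obtain p where p: "degree p \<le> n - 1"
      "\<And>q. ip ?Sd ?wd (\<lambda>r. poly q (real (r j))) h = ip ?S2 ?w2 (\<lambda>r. poly q (real (r 0))) (\<lambda>r. poly p (real (r 0)))"
      using transfer[OF j pos h] unfolding \<beta>2_def by blast
    have "inner_DM d \<alpha> N g h = ip ?S2 ?w2 (\<lambda>r. poly qK (real (r 0))) (\<lambda>r. poly p (real (r 0)))"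
      unfolding inner_DM_ip g_def[abs_def] by (rule p(2))
    also have "\<dots> = inner_DM 2 \<beta>2 N K (\<lambda>r. poly p (real (r 0)))"
      unfolding inner_DM_ip by (rule ip_cong) (simp_all add: Kcong)
    also have "\<dots> = 0"
      using VK n0 polyfun_univar[of 0 2 p "n - 1" N] p(1) unfolding Vspace_def by simp
    finally show "inner_DM d \<alpha> N g h = 0" .
  qed
  have rep: "ip ?Sd ?wd g P = P v" if P: "P \<in> Bd" for P
  proof -
    have VP: "Vspace d \<alpha> N n P" by (rule Bdp(2)[OF P])
    obtain p where p: "degree p \<le> n"
      "\<And>q. ip ?Sd ?wd (\<lambda>r. poly q (real (r j))) P = ip ?S2 ?w2 (\<lambda>r. poly q (real (r 0))) (\<lambda>r. poly p (real (r 0)))"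
      "?w2 v2 * poly p (real N) = ?wd v * P v"
      using transfer[OF j pos, of N n P] VP unfolding Vspace_def \<beta>2_def v_def v2_def by blast
    define F where "F r = poly p (real (r (0::nat)))" for r :: "nat \<Rightarrow> nat"
    have VF: "Vspace 2 \<beta>2 N n F"
      unfolding Vspace_def
    proof (intro conjI impI allI)
      show "polyfun 2 N n F" unfolding F_def[abs_def] by (rule polyfun_univar) (simp_all add: p(1))
    next
      fix h2 assume n0: "0 < n" and h2: "polyfun 2 N (n - 1) h2"
      obtain q2 where q2: "degree q2 \<le> n - 1" "\<And>k. k \<le> N \<Longrightarrow> h2 (pt2 N k) = poly q2 (real k)"
        using polyfun2_univar[OF h2] by blast
      have h2c: "h2 r = poly q2 (real (r 0))" if "r \<in> ?S2" for r
        using q2(2)[OF simplex2_le[OF that]] pt2_inv[OF that] by simp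
      have "inner_DM 2 \<beta>2 N F h2 = ip ?S2 ?w2 (\<lambda>r. poly q2 (real (r 0))) (\<lambda>r. poly p (real (r 0)))"
        unfolding inner_DM_ip F_def[abs_def]
        by (subst ip_comm, rule ip_cong) (simp_all add: h2c)
      also have "\<dots> = ip ?Sd ?wd (\<lambda>r. poly q2 (real (r j))) P" by (rule p(2)[symmetric])
      also have "\<dots> = inner_DM d \<alpha> N P (\<lambda>r. poly q2 (real (r j)))" unfolding inner_DM_ip by (rule ip_comm)
      also have "\<dots> = 0" using VP n0 polyfun_univar[OF j q2(1)] unfolding Vspace_def by blast
      finally show "inner_DM 2 \<beta>2 N F h2 = 0" .
    qed
    have "ip ?Sd ?wd g P = ip ?S2 ?w2 (\<lambda>r. poly qK (real (r 0))) F"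
      unfolding g_def[abs_def] F_def[abs_def] by (rule p(2))
    also have "\<dots> = ip ?S2 ?w2 K F"
      by (rule ip_cong) (simp_all add: Kcong)
    also have "\<dots> = F v2"
      unfolding K_def[abs_def]
      by (rule kernel_repro[OF B2p(1) B2p(3) VF B2p(4)]) (simp add: v2_def pt2_simplex)
    also have "\<dots> = poly p (real N)" by (simp add: F_def v2_def pt2_def)
    also have "\<dots> = P v" using p(3) wv by simp
    finally show ?thesis .
  qed
  have "g s = (\<Sum>P\<in>Bd. P s * P v)"
    by (rule kernel_eval[OF Bdp(1) Bdp(3) Vg Bdp(4) rep s])
  then show ?thesis
    unfolding hahn2_eq hahn_kernel_def Let_def Bd_def[symmetric] v_def[symmetric] by simp
qed

end
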